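(* Let $a\in(-2,0)$, $r(x)=ax/(1+x)$ for $x>-1$, $A_a(m)=m+r(m)+\frac{1}{r(m)}\int_m^0 r(s)\,ds$, and let $m\in(-1,0)$ and $M>0$ with $M\le A_a(m)$. Then $$\beta_-:=\frac{1}{2a}+\frac{m}{r(M)}>0.$$ *)

theory Defs
  imports "HOL-Analysis.Analysis"
begin

definition r_fun :: "real \<Rightarrow> real \<Rightarrow> real" where
  "r_fun a x = a * x / (1 + x)"

text \<open>A_a(m) = m + r(m) + (1/r(m)) * integral from m to 0 of r(s) ds (m < 0, so m..0 is the
  natural orientation).\<close>
definition A_fun :: "real \<Rightarrow> real \<Rightarrow> real" where
  "A_fun a m = m + r_fun a m + (1 / r_fun a m) * integral {m..0} (\<lambda>s. r_fun a s)"

end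

theory Submission
  imports Defs
begin

theorem lemma4p1:
  fixes a m M :: real
  assumes "-2 < a" and "a < 0"
    and "-1 < m" and "m < 0"
    and "0 < M" and "M \<le> A_fun a m"
  shows "1 / (2 * a) + m / r_fun a M > 0"
proof -
  define c where "c = a / (1 + m)"
  have c: "c < 0" using assms unfolding c_def by (simp add: divide_neg_pos)
  have lin: "((\<lambda>s. c * s) has_integral (c * 0\<^sup>2 / 2 - c * m\<^sup>2 / 2)) {m..0}"
  proof (rule fundamental_theorem_of_calculus)
    show "m \<le> 0" using assms by simp
    fix x assume "x \<in> {m..0}"
    show "((\<lambda>s. c * s\<^sup>2 / 2) has_vector_derivative c * x) (at x within {m..0})"
      by (auto intro!: derivative_eq_intros simp: has_real_derivative_iff_has_vector_derivative[symmetric])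
  qed
  have cont: "continuous_on {m..0} (r_fun a)"
    unfolding r_fun_def using assms
    by (intro continuous_intros) (auto simp: add_eq_0_iff)
  have rint: "r_fun a integrable_on {m..0}"
    using cont integrable_continuous_interval by blast
  have pt: "r_fun a s \<le> c * s" if "s \<in> {m..0}" for s
  proof -
    from that have s: "m \<le> s" "s \<le> 0" by auto
    have "s / (1 + m) \<le> s / (1 + s)"
      using s assms by (intro divide_left_mono_neg) (auto simp: mult_pos_pos)
    hence "a * (s / (1 + s)) \<le> a * (s / (1 + m))"
      using assms by (intro mult_left_mono_neg) auto
    thus ?thesis unfolding r_fun_def c_def by simp
  qed
  have I: "integral {m..0} (r_fun a) \<le> - c * m\<^sup>2 / 2"
    using integral_le[OF rint has_integral_integrable[OF lin] pt] integral_unique[OF lin]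
    by simp
  have rm: "r_fun a m = c * m" unfolding r_fun_def c_def by simp
  have rmpos: "c * m > 0" using c assms by (simp add: mult_neg_neg)
  have "(1 / r_fun a m) * integral {m..0} (r_fun a) \<le> (1 / (c*m)) * (- c * m\<^sup>2 / 2)"
    unfolding rm using I rmpos by (intro mult_left_mono) auto
  also have "\<dots> = - m / 2" using rmpos c assms by (simp add: power2_eq_square field_simps)
  finally have J: "(1 / r_fun a m) * integral {m..0} (r_fun a) \<le> - m / 2" .
  have K: "a * m / (1 + m) < -2 * m / (1 + m)"
    using assms by (intro divide_strict_right_mono) (use mult_strict_right_mono_neg[of "-2" a m] in auto)
  have A: "A_fun a m < m / 2 - 2 * m / (1 + m)"
    using J K unfolding A_fun_def r_fun_def[of a m] by (simp add: r_fun_def[abs_def])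
  have key: "M * (1 + 2 * m) < -2 * m"
  proof (cases "1 + 2 * m \<le> 0")
    case True
    then show ?thesis using assms by (smt (verit) mult_nonneg_nonpos)
  next
    case False
    have "m / 2 - 2 * m / (1 + m) \<le> - 2 * m / (1 + 2*m)"
    proof -
      have "m * (1 - m + 2*m*m) \<le> 0" using assms
        by (intro mult_nonpos_nonneg) (auto intro: add_nonneg_nonneg simp: mult_nonpos_nonpos)
      thus ?thesis using False assms by (simp add: field_simps)
    qed
    hence "M < - 2 * m / (1 + 2*m)" using A assms by linarith
    thus ?thesis using False by (simp add: field_simps)
  qed
  have rM: "r_fun a M = a * M / (1 + M)" by (simp add: r_fun_def)
  have "m / r_fun a M = m * (1 + M) / (a * M)" using assms by (simp add: rM field_simps)
  moreover have "1 / (2 * a) + m * (1 + M) / (a * M) = (M + 2 * m * (1 + M)) / (2 * a * M)"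
    using assms by (simp add: field_simps)
  moreover have "(M + 2 * m * (1 + M)) / (2 * a * M) > 0"
    using key assms by (intro divide_neg_neg) (auto simp: algebra_simps mult_pos_neg)
  ultimately show ?thesis by simp
qed

end
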